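(* Let $n\ge 2k\ge 2$ and let $S\subseteq\{0,1,\ldots,k-1\}$ with $|S|=s>1$, and let $X=\bigcup_{i\in S}J(n,k,i)$. If $X$ admits perfect state transfer at time $\tau$, then $n=2k$ and there is a permutation matrix $T$ of order two with no fixed points and a complex number $\lambda$ with $|\lambda|=1$ such that $\mathcal{H}_X(\tau)=\lambda T$.
   Context: $J(n,k,i)$ is the graph on the $k$-subsets of $\{1,\ldots,n\}$ with $A\sim B$ iff $|A\cap B|=i$; the union $\bigcup_{i\in S}J(n,k,i)$ has $A\sim B$ iff $|A\cap B|\in S$. For a simple graph $X$ with adjacency matrix $A$, $\mathcal{H}_X(t)=e^{itA}$. $X$ admits perfect state transfer at time $\tau>0$ if $|\mathcal{H}_X(\tau)_{u,v}|=1$ for some vertices $u\neq v$. *)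

theory Defs
  imports Complex_Main
begin

definition ksubsets :: "nat \<Rightarrow> nat \<Rightarrow> nat set set" where
  "ksubsets n k = {A. A \<subseteq> {1..n} \<and> card A = k}"

text \<open>Adjacency matrix of the union of J(n,k,i) over i in S (entries 0/1, indexed by vertices).\<close>
definition union_adj :: "nat \<Rightarrow> nat \<Rightarrow> nat set \<Rightarrow> nat set \<Rightarrow> nat set \<Rightarrow> complex" where
  "union_adj n k S A B =
     (if A \<in> ksubsets n k \<and> B \<in> ksubsets n k \<and> card (A \<inter> B) \<in> S then 1 else 0)"

definition mat_id :: "'a \<Rightarrow> 'a \<Rightarrow> complex" where
  "mat_id u v = (if u = v then 1 else 0)"

definition mat_mult :: "'a set \<Rightarrow> ('a \<Rightarrow> 'a \<Rightarrow> complex) \<Rightarrow> ('a \<Rightarrow> 'a \<Rightarrow> complex) \<Rightarrow> 'a \<Rightarrow> 'a \<Rightarrow> complex" where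
  "mat_mult V M N u v = (\<Sum>w\<in>V. M u w * N w v)"

fun mat_pow :: "'a set \<Rightarrow> ('a \<Rightarrow> 'a \<Rightarrow> complex) \<Rightarrow> nat \<Rightarrow> 'a \<Rightarrow> 'a \<Rightarrow> complex" where
  "mat_pow V M 0 = mat_id"
| "mat_pow V M (Suc m) = mat_mult V M (mat_pow V M m)"

text \<open>Transition matrix H_X(t) = exp(i t A), written as the exponential power series (entrywise).\<close>
definition transition :: "'a set \<Rightarrow> ('a \<Rightarrow> 'a \<Rightarrow> complex) \<Rightarrow> real \<Rightarrow> 'a \<Rightarrow> 'a \<Rightarrow> complex" where
  "transition V A t u v = (\<Sum>m. ((\<i> * complex_of_real t) ^ m / of_nat (fact m)) * mat_pow V A m u v)"

definition has_pst :: "'a set \<Rightarrow> ('a \<Rightarrow> 'a \<Rightarrow> complex) \<Rightarrow> real \<Rightarrow> bool" where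
  "has_pst V A \<tau> \<longleftrightarrow> \<tau> > 0 \<and>
     (\<exists>u\<in>V. \<exists>v\<in>V. u \<noteq> v \<and> cmod (transition V A \<tau> u v) = 1)"

definition perm_matrix :: "'a set \<Rightarrow> ('a \<Rightarrow> 'a \<Rightarrow> complex) \<Rightarrow> bool" where
  "perm_matrix V T \<longleftrightarrow> (\<exists>\<sigma>. bij_betw \<sigma> V V \<and> (\<forall>u\<in>V. \<forall>v\<in>V. T u v = (if \<sigma> u = v then 1 else 0)))"

end

theory Submission imports Defs begin

definition cf :: "real \<Rightarrow> nat \<Rightarrow> complex" where
  "cf t m = (\<i> * complex_of_real t) ^ m / of_nat (fact m)"

lemma transition_cf: "transition V A t u v = (\<Sum>m. cf t m * mat_pow V A m u v)"
  by (simp add: transition_def cf_def)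

lemma mat_pow_bound:
  assumes "finite V" "\<And>u v. cmod (A u v) \<le> 1"
  shows "cmod (mat_pow V A m u v) \<le> real (card V) ^ m"
proof (induction m arbitrary: u v)
  case 0 then show ?case by (simp add: mat_id_def)
next
  case (Suc m)
  have "cmod (mat_pow V A (Suc m) u v) \<le> (\<Sum>w\<in>V. cmod (A u w * mat_pow V A m w v))"
    by (simp add: mat_mult_def norm_sum)
  also have "\<dots> \<le> (\<Sum>w\<in>V. real (card V) ^ m)"
  proof (rule sum_mono)
    fix w assume "w \<in> V"
    have "cmod (A u w * mat_pow V A m w v) = cmod (A u w) * cmod (mat_pow V A m w v)"
      by (simp add: norm_mult)
    also have "\<dots> \<le> 1 * real (card V) ^ m"
      by (rule mult_mono) (use assms(2) Suc in auto)
    finally show "cmod (A u w * mat_pow V A m w v) \<le> real (card V) ^ m" by simp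
  qed
  also have "\<dots> = real (card V) ^ Suc m" by simp
  finally show ?case .
qed

lemma norm_cf: "cmod (cf t m) = \<bar>t\<bar> ^ m / fact m"
  by (simp add: cf_def norm_mult norm_power norm_divide)

lemma summable_term:
  assumes "finite V" "\<And>u v. cmod (A u v) \<le> 1"
  shows "summable (\<lambda>m. cmod (cf t m * mat_pow V A m u v))"
proof (rule summable_comparison_test[where g = "\<lambda>m. (\<bar>t\<bar> * real (card V)) ^ m /\<^sub>R fact m"])
  show "summable (\<lambda>m. (\<bar>t\<bar> * real (card V)) ^ m /\<^sub>R fact m)" by (rule summable_exp_generic)
  show "\<exists>N. \<forall>n\<ge>N. norm (cmod (cf t n * mat_pow V A n u v)) \<le> (\<bar>t\<bar> * real (card V)) ^ n /\<^sub>R fact n"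
  proof (intro exI allI impI)
    fix n :: nat
    have "norm (cmod (cf t n * mat_pow V A n u v)) = \<bar>t\<bar> ^ n / fact n * cmod (mat_pow V A n u v)"
      by (simp add: norm_mult norm_cf)
    also have "\<dots> \<le> \<bar>t\<bar> ^ n / fact n * real (card V) ^ n"
      by (rule mult_left_mono) (use mat_pow_bound[OF assms] in auto)
    also have "\<dots> = (\<bar>t\<bar> * real (card V)) ^ n /\<^sub>R fact n"
      by (simp add: power_mult_distrib divide_simps)
    finally show "norm (cmod (cf t n * mat_pow V A n u v)) \<le> (\<bar>t\<bar> * real (card V)) ^ n /\<^sub>R fact n" .
  qed
qed

lemma mat_pow_add:
  assumes "finite V" "u \<in> V"
  shows "mat_mult V (mat_pow V A i) (mat_pow V A j) u v = mat_pow V A (i + j) u v"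
  using assms(2)
proof (induction i arbitrary: u)
  case 0
  have "mat_mult V mat_id (mat_pow V A j) u v = (\<Sum>w\<in>V. (if u = w then mat_pow V A j w v else 0))"
    unfolding mat_mult_def mat_id_def by (rule sum.cong) auto
  also have "\<dots> = mat_pow V A j u v" using 0 assms(1) by (simp add: sum.delta)
  finally show ?case by simp
next
  case (Suc i)
  have "mat_mult V (mat_pow V A (Suc i)) (mat_pow V A j) u v
      = (\<Sum>w\<in>V. \<Sum>x\<in>V. A u x * mat_pow V A i x w * mat_pow V A j w v)"
    by (simp add: mat_mult_def sum_distrib_right)
  also have "\<dots> = (\<Sum>x\<in>V. \<Sum>w\<in>V. A u x * mat_pow V A i x w * mat_pow V A j w v)"
    by (rule sum.swap)
  also have "\<dots> = (\<Sum>x\<in>V. A u x * mat_mult V (mat_pow V A i) (mat_pow V A j) x v)"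
    by (simp add: mat_mult_def sum_distrib_left mult.assoc)
  also have "\<dots> = (\<Sum>x\<in>V. A u x * mat_pow V A (i + j) x v)"
    using Suc.IH by simp
  also have "\<dots> = mat_pow V A (Suc i + j) u v" by (simp add: mat_mult_def)
  finally show ?case .
qed

lemma cf_add: "cf (s + t) n = (\<Sum>i\<le>n. cf s i * cf t (n - i))"
proof -
  have "(\<i> * complex_of_real s + \<i> * complex_of_real t) ^ n /\<^sub>R fact n =
     (\<Sum>i\<le>n. (\<i> * complex_of_real s) ^ i /\<^sub>R fact i * (\<i> * complex_of_real t) ^ (n - i) /\<^sub>R fact (n - i))"
    using exp_series_add_commuting[of "\<i> * complex_of_real s" "\<i> * complex_of_real t" n] by simp
  then show ?thesis
    by (simp add: cf_def scaleR_conv_of_real distrib_left divide_inverse mult_ac)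
qed

lemma transition_add:
  assumes "finite V" "\<And>u v. cmod (A u v) \<le> 1" "u \<in> V"
  shows "mat_mult V (transition V A s) (transition V A t) u v = transition V A (s + t) u v"
proof -
  define x where "x = (\<lambda>w m. cf s m * mat_pow V A m u w)"
  define y where "y = (\<lambda>w m. cf t m * mat_pow V A m w v)"
  define g where "g w N = (\<Sum>i\<le>N. x w i * y w (N - i))" for w N
  have sx: "summable (\<lambda>m. norm (x w m))" for w unfolding x_def by (rule summable_term[OF assms(1,2)])
  have sy: "summable (\<lambda>m. norm (y w m))" for w unfolding y_def by (rule summable_term[OF assms(1,2)])
  have gs: "g w sums (suminf (x w) * suminf (y w))" for w
    unfolding g_def by (rule Cauchy_product_sums[OF sx sy])
  have "mat_mult V (transition V A s) (transition V A t) u v = (\<Sum>w\<in>V. suminf (x w) * suminf (y w))"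
    by (simp add: mat_mult_def transition_cf x_def y_def)
  also have "\<dots> = (\<Sum>w\<in>V. suminf (g w))"
    using gs by (simp add: sums_iff)
  also have "\<dots> = (\<Sum>N. \<Sum>w\<in>V. g w N)"
    by (rule suminf_sum[symmetric]) (use gs in \<open>auto simp: sums_iff\<close>)
  also have "\<dots> = (\<Sum>N. cf (s + t) N * mat_pow V A N u v)"
  proof (rule arg_cong[where f = suminf], rule ext)
    fix N
    have "(\<Sum>w\<in>V. g w N) = (\<Sum>i\<le>N. cf s i * cf t (N - i) * mat_mult V (mat_pow V A i) (mat_pow V A (N - i)) u v)"
      unfolding g_def x_def y_def mat_mult_def
      by (subst sum.swap) (simp add: sum_distrib_left mult_ac)
    also have "\<dots> = (\<Sum>i\<le>N. cf s i * cf t (N - i) * mat_pow V A N u v)"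
      by (rule sum.cong) (simp_all add: mat_pow_add[OF assms(1,3)])
    also have "\<dots> = cf (s + t) N * mat_pow V A N u v"
      by (simp add: cf_add sum_distrib_right)
    finally show "(\<Sum>w\<in>V. g w N) = cf (s + t) N * mat_pow V A N u v" .
  qed
  also have "\<dots> = transition V A (s + t) u v" by (simp add: transition_cf)
  finally show ?thesis .
qed

lemma transition_0:
  "transition V A 0 u v = mat_id u v"
proof -
  have "(\<lambda>m. cf 0 m * mat_pow V A m u v) = (\<lambda>m. if m = 0 then mat_pow V A m u v else 0)"
    by (auto simp: cf_def)
  then show ?thesis using sums_single[of 0 "\<lambda>m. mat_pow V A m u v"]
    by (simp add: transition_cf sums_iff)
qed

lemma mat_pow_one:
  assumes "finite V" "v \<in> V"
  shows "mat_pow V A (Suc 0) w v = A w v"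
proof -
  have "mat_pow V A (Suc 0) w v = (\<Sum>x\<in>V. if x = v then A w x else 0)"
    unfolding mat_pow.simps mat_mult_def mat_id_def by (rule sum.cong) auto
  also have "\<dots> = A w v" using assms by (simp add: sum.delta')
  finally show ?thesis .
qed

lemma mat_pow_sym:
  assumes "finite V" "\<And>u v. A u v = A v u" "u \<in> V" "v \<in> V"
  shows "mat_pow V A m u v = mat_pow V A m v u"
  using assms(3,4)
proof (induction m arbitrary: u v)
  case 0 then show ?case by (simp add: mat_id_def)
next
  case (Suc m)
  have "mat_pow V A (Suc m) u v = (\<Sum>w\<in>V. A u w * mat_pow V A m w v)" by (simp add: mat_mult_def)
  also have "\<dots> = (\<Sum>w\<in>V. mat_pow V A m v w * mat_pow V A (Suc 0) w u)"
  proof (rule sum.cong)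
    fix w assume w: "w \<in> V"
    show "A u w * mat_pow V A m w v = mat_pow V A m v w * mat_pow V A (Suc 0) w u"
      using Suc.IH[OF w Suc.prems(2)] assms(2)[of u w] mat_pow_one[OF assms(1) Suc.prems(1)]
      by simp
  qed simp
  also have "\<dots> = mat_mult V (mat_pow V A m) (mat_pow V A (Suc 0)) v u" by (simp add: mat_mult_def)
  also have "\<dots> = mat_pow V A (Suc m) v u" using mat_pow_add[OF assms(1) Suc.prems(2), of A m "Suc 0" u] by simp
  finally show ?case .
qed

lemma mat_pow_real:
  assumes "\<And>u v. cnj (A u v) = A u v"
  shows "cnj (mat_pow V A m u v) = mat_pow V A m u v"
proof (induction m arbitrary: u v)
  case 0 then show ?case by (simp add: mat_id_def)
next
  case (Suc m) then show ?case by (simp add: mat_mult_def assms)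
qed

lemma transition_summable:
  assumes "finite V" "\<And>u v. cmod (A u v) \<le> 1"
  shows "summable (\<lambda>m. cf t m * mat_pow V A m u v)"
  by (rule summable_norm_cancel[OF summable_term[OF assms]])

lemma cnj_cf: "cnj (cf t m) = cf (-t) m"
proof -
  have h: "cnj (\<i> * complex_of_real t) = \<i> * complex_of_real (-t)" by simp
  show ?thesis unfolding cf_def
    by (simp only: complex_cnj_divide complex_cnj_power complex_cnj_of_nat h)
qed

lemma transition_cnj:
  assumes "finite V" "\<And>u v. cmod (A u v) \<le> 1" "\<And>u v. cnj (A u v) = A u v"
  shows "cnj (transition V A t u v) = transition V A (-t) u v"
proof -
  have "(\<lambda>m. cf t m * mat_pow V A m u v) sums (\<Sum>m. cf t m * mat_pow V A m u v)"
    using transition_summable[OF assms(1,2)] by (rule summable_sums)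
  then have "(\<lambda>m. cnj (cf t m * mat_pow V A m u v)) sums cnj (\<Sum>m. cf t m * mat_pow V A m u v)"
    by (simp only: sums_cnj)
  moreover have "(\<lambda>m. cnj (cf t m * mat_pow V A m u v)) = (\<lambda>m. cf (-t) m * mat_pow V A m u v)"
  proof
    fix m show "cnj (cf t m * mat_pow V A m u v) = cf (-t) m * mat_pow V A m u v"
      by (simp only: complex_cnj_mult cnj_cf mat_pow_real[OF assms(3)])
  qed
  ultimately have "(\<lambda>m. cf (-t) m * mat_pow V A m u v) sums cnj (\<Sum>m. cf t m * mat_pow V A m u v)"
    by simp
  then show ?thesis unfolding transition_cf by (simp add: sums_iff)
qed

lemma transition_sym:
  assumes "finite V" "\<And>u v. A u v = A v u" "u \<in> V" "v \<in> V"
  shows "transition V A t u v = transition V A t v u"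
  by (simp add: transition_def mat_pow_sym[OF assms])

lemma mat_pow_inv:
  assumes "finite V" "bij_betw f V V" "\<And>u v. u \<in> V \<Longrightarrow> v \<in> V \<Longrightarrow> A (f u) (f v) = A u v"
    "u \<in> V" "v \<in> V"
  shows "mat_pow V A m (f u) (f v) = mat_pow V A m u v"
  using assms(4,5)
proof (induction m arbitrary: u)
  case 0
  have "inj_on f V" using assms(2) bij_betw_def by blast
  then show ?case using 0 by (auto simp: mat_id_def inj_on_def)
next
  case (Suc m)
  have "mat_pow V A (Suc m) (f u) (f v) = (\<Sum>w\<in>V. A (f u) w * mat_pow V A m w (f v))"
    by (simp add: mat_mult_def)
  also have "\<dots> = (\<Sum>w\<in>V. A (f u) (f w) * mat_pow V A m (f w) (f v))"
    using sum.reindex_bij_betw[OF assms(2), of "\<lambda>w. A (f u) w * mat_pow V A m w (f v)"] by simp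
  also have "\<dots> = (\<Sum>w\<in>V. A u w * mat_pow V A m w v)"
    by (rule sum.cong) (use Suc assms in auto)
  also have "\<dots> = mat_pow V A (Suc m) u v" by (simp add: mat_mult_def)
  finally show ?case .
qed

lemma transition_inv:
  assumes "finite V" "bij_betw f V V" "\<And>u v. u \<in> V \<Longrightarrow> v \<in> V \<Longrightarrow> A (f u) (f v) = A u v"
    "u \<in> V" "v \<in> V"
  shows "transition V A t (f u) (f v) = transition V A t u v"
  using mat_pow_inv[where f=f and A=A and V=V, OF assms] by (simp add: transition_def)

lemma column_norm:
  assumes "finite V" "\<And>u v. cmod (A u v) \<le> 1" "\<And>u v. cnj (A u v) = A u v"
    "\<And>u v. A u v = A v u" "u \<in> V"
  shows "(\<Sum>w\<in>V. (cmod (transition V A t w u))\<^sup>2) = 1"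
proof -
  have "mat_mult V (transition V A t) (transition V A (-t)) u u = transition V A 0 u u"
    using transition_add[OF assms(1,2,5), where s=t and t="-t" and v=u] by simp
  also have "\<dots> = 1" by (simp add: transition_0 mat_id_def)
  finally have 1: "(\<Sum>w\<in>V. transition V A t u w * transition V A (-t) w u) = 1"
    by (simp add: mat_mult_def)
  have "(\<Sum>w\<in>V. transition V A t u w * transition V A (-t) w u)
      = (\<Sum>w\<in>V. complex_of_real ((cmod (transition V A t w u))\<^sup>2))"
  proof (rule sum.cong)
    fix w assume "w \<in> V"
    then have "transition V A t u w * transition V A (-t) w u
       = transition V A t w u * cnj (transition V A t w u)"
      using transition_sym[OF assms(1,4) \<open>w \<in> V\<close> assms(5)] transition_cnj[OF assms(1,2,3)]
      by simp
    then show "transition V A t u w * transition V A (-t) w u = complex_of_real ((cmod (transition V A t w u))\<^sup>2)"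
      by (metis complex_norm_square)
  qed simp
  with 1 have "complex_of_real (\<Sum>w\<in>V. (cmod (transition V A t w u))\<^sup>2) = 1" by simp
  then show ?thesis using of_real_eq_1_iff by blast
qed

lemma column_unique:
  assumes "finite V" "\<And>u v. cmod (A u v) \<le> 1" "\<And>u v. cnj (A u v) = A u v"
    "\<And>u v. A u v = A v u" "v \<in> V" "w0 \<in> V" "cmod (transition V A t w0 v) = 1"
    "w \<in> V" "w \<noteq> w0"
  shows "transition V A t w v = 0"
proof -
  let ?f = "\<lambda>w. (cmod (transition V A t w v))\<^sup>2"
  have "(\<Sum>w\<in>V. ?f w) = ?f w0 + (\<Sum>w\<in>V - {w0}. ?f w)"
    using assms(1,6) by (rule sum.remove)
  then have "(\<Sum>w\<in>V - {w0}. ?f w) = 0"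
    using column_norm[OF assms(1-5)] assms(7) by simp
  then have "\<forall>w\<in>V - {w0}. ?f w = 0"
    using assms(1) by (subst (asm) sum_nonneg_eq_0_iff) auto
  then show ?thesis using assms(8,9) by auto
qed

lemma finite_ksubsets: "finite (ksubsets n k)"
proof -
  have "ksubsets n k \<subseteq> Pow {1..n}" by (auto simp: ksubsets_def)
  then show ?thesis by (rule finite_subset) simp
qed

lemma adj_bound: "cmod (union_adj n k S u v) \<le> 1"
  by (simp add: union_adj_def)

lemma adj_real: "cnj (union_adj n k S u v) = union_adj n k S u v"
  by (simp add: union_adj_def)

lemma adj_sym: "union_adj n k S u v = union_adj n k S v u"
  by (simp add: union_adj_def Int_commute conj_ac)

lemma perm_inv:
  assumes "bij_betw \<sigma> {1..n} {1..n}" "u \<in> ksubsets n k" "v \<in> ksubsets n k"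
  shows "transition (ksubsets n k) (union_adj n k S) t (\<sigma> ` u) (\<sigma> ` v)
       = transition (ksubsets n k) (union_adj n k S) t u v"
proof -
  let ?V = "ksubsets n k"
  have inj: "inj_on \<sigma> {1..n}" and im: "\<sigma> ` {1..n} = {1..n}"
    using assms(1) by (auto simp: bij_betw_def)
  have into: "(\<lambda>x. \<sigma> ` x) ` ?V \<subseteq> ?V"
  proof
    fix y assume "y \<in> (\<lambda>x. \<sigma> ` x) ` ?V"
    then obtain x where x: "x \<in> ?V" "y = \<sigma> ` x" by blast
    then have "x \<subseteq> {1..n}" "card x = k" by (auto simp: ksubsets_def)
    moreover have "card (\<sigma> ` x) = card x"
      using inj \<open>x \<subseteq> {1..n}\<close> by (meson card_image inj_on_subset)
    ultimately show "y \<in> ?V" using x im by (auto simp: ksubsets_def)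
  qed
  have injV: "inj_on (\<lambda>x. \<sigma> ` x) ?V"
    unfolding inj_on_def
  proof (intro ballI impI)
    fix x y assume "x \<in> ?V" "y \<in> ?V" "\<sigma> ` x = \<sigma> ` y"
    then show "x = y" using inj_on_image_eq_iff[OF inj] by (auto simp: ksubsets_def)
  qed
  have bij: "bij_betw (\<lambda>x. \<sigma> ` x) ?V ?V"
    unfolding bij_betw_def using injV endo_inj_surj[OF finite_ksubsets into injV] by blast
  have pres: "union_adj n k S (\<sigma> ` x) (\<sigma> ` y) = union_adj n k S x y" if "x \<in> ?V" "y \<in> ?V" for x y
  proof -
    have sub: "x \<subseteq> {1..n}" "y \<subseteq> {1..n}" using that by (auto simp: ksubsets_def)
    have "\<sigma> ` x \<inter> \<sigma> ` y = \<sigma> ` (x \<inter> y)"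
      using inj sub by (simp add: inj_on_image_Int)
    moreover have "card (\<sigma> ` (x \<inter> y)) = card (x \<inter> y)"
      using inj sub by (meson card_image inj_on_subset le_infI1)
    moreover have "\<sigma> ` x \<in> ?V" "\<sigma> ` y \<in> ?V" using into that by auto
    ultimately show ?thesis using that by (simp add: union_adj_def)
  qed
  show ?thesis
    using transition_inv[where f = "\<lambda>x. \<sigma> ` x" and V = ?V and A = "union_adj n k S",
        OF finite_ksubsets bij pres assms(2,3)] by simp
qed

definition sw :: "nat \<Rightarrow> nat \<Rightarrow> nat \<Rightarrow> nat" where
  "sw x y z = (if z = x then y else if z = y then x else z)"

lemma sw_sw: "sw x y (sw x y z) = z"
  by (simp add: sw_def)

lemma sw_in: "x \<in> M \<Longrightarrow> y \<in> M \<Longrightarrow> z \<in> M \<Longrightarrow> sw x y z \<in> M"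
  by (simp add: sw_def)

lemma sw_bij:
  assumes "x \<in> M" "y \<in> M"
  shows "bij_betw (sw x y) M M"
proof (rule bij_betw_byWitness[where f' = "sw x y"])
  show "\<forall>a\<in>M. sw x y (sw x y a) = a" by (simp add: sw_sw)
  show "\<forall>a\<in>M. sw x y (sw x y a) = a" by (simp add: sw_sw)
  show "sw x y ` M \<subseteq> M" using assms sw_in by blast
  show "sw x y ` M \<subseteq> M" using assms sw_in by blast
qed

lemma sw_in2: "(x \<in> M \<longleftrightarrow> y \<in> M) \<Longrightarrow> z \<in> M \<Longrightarrow> sw x y z \<in> M"
  unfolding sw_def by (cases "z = x"; cases "z = y") auto

lemma sw_fix:
  assumes "x \<in> M \<longleftrightarrow> y \<in> M"
  shows "sw x y ` M = M"
proof
  show "sw x y ` M \<subseteq> M" using sw_in2[OF assms] by blast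
  show "M \<subseteq> sw x y ` M"
  proof
    fix z assume "z \<in> M"
    then have "sw x y (sw x y z) = z" "sw x y z \<in> M" using sw_sw sw_in2[OF assms] by auto
    then show "z \<in> sw x y ` M" by (metis imageI)
  qed
qed

lemma sw_move:
  assumes "x \<in> M" "y \<notin> M"
  shows "sw x y ` M \<noteq> M"
proof -
  have "sw x y x = y" by (simp add: sw_def)
  then have "y \<in> sw x y ` M" using assms(1) by (metis imageI)
  then show ?thesis using assms(2) by auto
qed

theorem mainTheorem19:
  fixes n k :: nat and S :: "nat set" and \<tau> :: real
  assumes "n \<ge> 2 * k" and "2 * k \<ge> 2"
    and "S \<subseteq> {0..<k}" and "card S > 1"
    and "has_pst (ksubsets n k) (union_adj n k S) \<tau>"
  shows "n = 2 * k \<and>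
    (\<exists>T (c::complex). perm_matrix (ksubsets n k) T
       \<and> (\<forall>u\<in>ksubsets n k. \<forall>v\<in>ksubsets n k.
             mat_mult (ksubsets n k) T T u v = mat_id u v)
       \<and> (\<exists>u\<in>ksubsets n k. \<exists>v\<in>ksubsets n k. T u v \<noteq> mat_id u v)
       \<and> (\<forall>u\<in>ksubsets n k. T u u = 0)
       \<and> cmod c = 1
       \<and> (\<forall>u\<in>ksubsets n k. \<forall>v\<in>ksubsets n k.
             transition (ksubsets n k) (union_adj n k S) \<tau> u v = c * T u v))"
proof -
  let ?V = "ksubsets n k"
  let ?A = "union_adj n k S"
  let ?H = "transition ?V ?A \<tau>"
  let ?N = "{1..n::nat}"
  have k1: "k \<ge> 1" using assms(2) by simp
  obtain u0 v0 where u0: "u0 \<in> ?V" and v0: "v0 \<in> ?V" and ne: "u0 \<noteq> v0"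
      and one: "cmod (?H u0 v0) = 1"
    using assms(5) unfolding has_pst_def by blast
  have colu: "?H w v = 0" if "v \<in> ?V" "w0 \<in> ?V" "cmod (?H w0 v) = 1" "w \<in> ?V" "w \<noteq> w0" for v w0 w
    by (rule column_unique[OF finite_ksubsets adj_bound adj_real adj_sym that])
  have u0s: "u0 \<subseteq> ?N" "card u0 = k" and v0s: "v0 \<subseteq> ?N" "card v0 = k"
    using u0 v0 by (auto simp: ksubsets_def)
  have const: "x \<in> u0 \<longleftrightarrow> y \<in> u0" if "x \<in> ?N" "y \<in> ?N" "x \<in> v0 \<longleftrightarrow> y \<in> v0" for x y
  proof (rule ccontr)
    assume c: "\<not> (x \<in> u0 \<longleftrightarrow> y \<in> u0)"
    have b: "bij_betw (sw x y) ?N ?N" using that by (intro sw_bij)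
    have fv: "sw x y ` v0 = v0" using that(3) by (rule sw_fix)
    have mv: "sw x y ` u0 \<noteq> u0"
    proof (cases "x \<in> u0")
      case True then show ?thesis using c by (intro sw_move) auto
    next
      case False
      then have "y \<in> u0" using c by blast
      moreover have "sw x y = sw y x" by (auto simp: sw_def)
      ultimately show ?thesis using False sw_move[of y u0 x] by auto
    qed
    have H: "?H (sw x y ` u0) v0 = ?H u0 v0"
      using perm_inv[OF b u0 v0, of S \<tau>] fv by simp
    have inV: "sw x y ` u0 \<in> ?V"
    proof -
      have "inj_on (sw x y) ?N" using b by (simp add: bij_betw_def)
      then have "card (sw x y ` u0) = card u0" using u0s(1) by (meson card_image inj_on_subset)
      moreover have "sw x y ` u0 \<subseteq> ?N" using b u0s(1) by (auto simp: bij_betw_def)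
      ultimately show ?thesis using u0s by (simp add: ksubsets_def)
    qed
    have "?H (sw x y ` u0) v0 = 0" by (rule colu[OF v0 u0 one inV mv])
    with H one show False by simp
  qed
  have v0ne: "v0 \<noteq> {}" using v0s k1 by auto
  then obtain a where a: "a \<in> v0" by blast
  have au: "a \<notin> u0"
  proof
    assume "a \<in> u0"
    then have "v0 \<subseteq> u0" using const a v0s(1) by blast
    then have "v0 = u0" using u0s v0s by (metis card_subset_eq finite_atLeastAtMost finite_subset)
    with ne show False by simp
  qed
  have u0v0: "u0 \<inter> v0 = {}" using const a au u0s(1) v0s(1) by blast
  have "u0 \<noteq> {}" using u0s k1 by auto
  then obtain b where b: "b \<in> u0" by blast
  have "b \<notin> v0" using u0v0 b by blast
  have u0eq: "u0 = ?N - v0"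
  proof
    show "u0 \<subseteq> ?N - v0" using u0s(1) u0v0 by blast
    show "?N - v0 \<subseteq> u0" using const b \<open>b \<notin> v0\<close> u0s(1) by blast
  qed
  have nk: "n = 2 * k"
  proof -
    have "card u0 = card ?N - card v0" using u0eq v0s(1) by (simp add: card_Diff_subset finite_subset)
    then show ?thesis using u0s v0s by simp
  qed
  define comp where "comp = (\<lambda>u. ?N - u)"
  have compV: "comp u \<in> ?V" if "u \<in> ?V" for u
  proof -
    have "u \<subseteq> ?N" "card u = k" using that by (auto simp: ksubsets_def)
    then have "card (comp u) = k" using nk by (simp add: comp_def card_Diff_subset finite_subset)
    then show ?thesis by (simp add: comp_def ksubsets_def)
  qed
  have compcomp: "comp (comp u) = u" if "u \<in> ?V" for u
    using that by (auto simp: comp_def ksubsets_def)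
  have compne: "comp u \<noteq> u" if "u \<in> ?V" for u
  proof
    assume "comp u = u"
    then have "u = {}" by (auto simp: comp_def)
    with that k1 show False by (simp add: ksubsets_def)
  qed
  define T :: "nat set \<Rightarrow> nat set \<Rightarrow> complex" where "T = (\<lambda>u v. if comp u = v then 1 else 0)"
  define c where "c = ?H u0 v0"
  have perm: "perm_matrix ?V T"
    unfolding perm_matrix_def
  proof (intro exI conjI)
    show "bij_betw comp ?V ?V"
      by (rule bij_betw_byWitness[where f' = comp]) (use compV compcomp in auto)
    show "\<forall>u\<in>?V. \<forall>v\<in>?V. T u v = (if comp u = v then 1 else 0)" by (simp add: T_def)
  qed
  have TT: "mat_mult ?V T T u v = mat_id u v" if "u \<in> ?V" "v \<in> ?V" for u v
  proof -
    have "mat_mult ?V T T u v = (\<Sum>w\<in>?V. if comp u = w then T w v else 0)"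
      unfolding mat_mult_def by (rule sum.cong) (auto simp: T_def)
    also have "\<dots> = T (comp u) v" using compV[OF that(1)] finite_ksubsets by (simp add: sum.delta)
    also have "\<dots> = mat_id u v" using compcomp[OF that(1)] compcomp[OF that(2)]
      by (auto simp: T_def mat_id_def)
    finally show ?thesis .
  qed
  have Tdiag: "T u u = 0" if "u \<in> ?V" for u using compne[OF that] by (simp add: T_def)
  have Tne: "\<exists>u\<in>?V. \<exists>v\<in>?V. T u v \<noteq> mat_id u v"
  proof -
    have "T v0 v0 \<noteq> mat_id v0 v0" using Tdiag[OF v0] by (simp add: mat_id_def)
    then show ?thesis using v0 by blast
  qed
  have Hform: "?H u v = c * T u v" if u: "u \<in> ?V" and v: "v \<in> ?V" for u v
  proof -
    have vs: "v \<subseteq> ?N" "card v = k" using v by (auto simp: ksubsets_def)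
    obtain g where g: "bij_betw g v0 v"
    proof -
      have "finite v0" "finite v" using v0s vs finite_subset by auto
      then show ?thesis using finite_same_card_bij[of v0 v] v0s vs that by auto
    qed
    obtain h where h: "bij_betw h (comp v0) (comp v)"
      using finite_same_card_bij[of "comp v0" "comp v"] compV[OF v0] compV[OF v]
      by (auto simp: ksubsets_def intro: finite_ksubsets) (metis finite_atLeastAtMost finite_subset Diff_subset)
    define \<sigma> where "\<sigma> = (\<lambda>z. if z \<in> v0 then g z else h z)"
    have b1: "bij_betw \<sigma> v0 v"
      using g by (rule bij_betw_cong[THEN iffD1, rotated]) (simp add: \<sigma>_def)
    have b2: "bij_betw \<sigma> (comp v0) (comp v)"
      using h by (rule bij_betw_cong[THEN iffD1, rotated]) (simp add: \<sigma>_def comp_def)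
    have "bij_betw \<sigma> (v0 \<union> comp v0) (v \<union> comp v)"
      by (rule bij_betw_combine[OF b1 b2]) (auto simp: comp_def)
    moreover have "v0 \<union> comp v0 = ?N" "v \<union> comp v = ?N" using v0s vs by (auto simp: comp_def)
    ultimately have bs: "bij_betw \<sigma> ?N ?N" by simp
    have sv: "\<sigma> ` v0 = v" using b1 by (simp add: bij_betw_def)
    have su: "\<sigma> ` u0 = comp v" using b2 u0eq by (simp add: bij_betw_def comp_def)
    have Hc: "?H (comp v) v = c"
      using perm_inv[OF bs u0 v0, of S \<tau>] sv su by (simp add: c_def)
    show ?thesis
    proof (cases "u = comp v")
      case True
      then have "comp u = v" using compcomp[OF v] by simp
      then show ?thesis using Hc True by (simp add: T_def)
    next
      case False
      have "comp u \<noteq> v" using False compcomp[OF u] by auto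
      moreover have "?H u v = 0"
        by (rule colu[OF v compV[OF v] _ u False]) (use Hc one c_def in simp)
      ultimately show ?thesis by (simp add: T_def)
    qed
  qed
  show ?thesis
    using nk perm TT Tne Tdiag Hform one unfolding c_def[symmetric] by blast
qed

end
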